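(* Let $G=(V,E)$ be an undirected graph with nonnegative edge weights, not necessarily planar. Let $Q$ be a shortest path in $G$, let $u\in V$, and let $\epsilon',\epsilon''>0$. Let $H$ be an undirected graph with nonnegative edge weights such that $u\in V(H)\subseteq V$ and $d_H(v_1,v_2)\ge d_G(v_1,v_2)$ for all $v_1,v_2\in V(H)$. Assume that for every $v\in V(Q)$ there is a vertex $v'\in V(H)\cap V(Q)$ with $$d_H(u,v')+d_Q(v',v)\le (1+\epsilon')\,d_G(u,v).$$ Then there is a subset $P_H\subseteq V(H)\cap V(Q)$ of size $O(1/\epsilon'')$ such that for every $v\in V(Q)$ there is a $p\in P_H$ with $$d_H(u,p)+d_Q(p,v)\le (1+\epsilon')(1+\epsilon'')\,d_G(u,v).$$
   Context: For a graph $X$ with nonnegative edge weights, $d_X(a,b)$ denotes the shortest-path distance between $a$ and $b$ in $X$. For the path $Q$, $d_Q(a,b)$ is the weight of the subpath of $Q$ between $a$ and $b$. *)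

theory Defs
  imports "HOL-Library.Extended_Nonnegative_Real"
begin

record 'a wgraph =
  verts :: "'a set"
  edges :: "('a \<times> 'a) set"
  weight :: "'a \<Rightarrow> 'a \<Rightarrow> real"

definition ugraph :: "'a wgraph \<Rightarrow> bool" where
  "ugraph G \<longleftrightarrow> finite (verts G) \<and> edges G \<subseteq> verts G \<times> verts G \<and> sym (edges G)
     \<and> (\<forall>(a,b)\<in>edges G. weight G a b \<ge> 0 \<and> weight G a b = weight G b a)"

definition is_walk :: "'a wgraph \<Rightarrow> 'a list \<Rightarrow> bool" where
  "is_walk G xs \<longleftrightarrow> xs \<noteq> [] \<and> set xs \<subseteq> verts G
     \<and> (\<forall>i. Suc i < length xs \<longrightarrow> (xs ! i, xs ! Suc i) \<in> edges G)"

definition walk_weight :: "'a wgraph \<Rightarrow> 'a list \<Rightarrow> real" where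
  "walk_weight G xs = (\<Sum>i<length xs - 1. weight G (xs ! i) (xs ! Suc i))"

text \<open>Shortest-path distance; \<infinity> if no walk exists.\<close>
definition gdist :: "'a wgraph \<Rightarrow> 'a \<Rightarrow> 'a \<Rightarrow> ennreal" where
  "gdist G a b = (INF xs \<in> {xs. is_walk G xs \<and> hd xs = a \<and> last xs = b}. ennreal (walk_weight G xs))"

definition shortest_path :: "'a wgraph \<Rightarrow> 'a list \<Rightarrow> bool" where
  "shortest_path G Q \<longleftrightarrow> is_walk G Q \<and> distinct Q
     \<and> ennreal (walk_weight G Q) = gdist G (hd Q) (last Q)"

definition path_dist :: "'a wgraph \<Rightarrow> 'a list \<Rightarrow> 'a \<Rightarrow> 'a \<Rightarrow> real" where
  "path_dist G Q a b =
     (let i = (THE i. i < length Q \<and> Q ! i = a); j = (THE j. j < length Q \<and> Q ! j = b)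
      in (\<Sum>k\<in>{min i j..<max i j}. weight G (Q ! k) (Q ! Suc k)))"

end

theory Submission
  imports Defs
begin


lemma is_walk_single[simp]: "is_walk G [x] \<longleftrightarrow> x \<in> verts G"
  by (simp add: is_walk_def)

lemma is_walk_Cons2: "is_walk G (x#y#zs) \<longleftrightarrow> x \<in> verts G \<and> (x,y) \<in> edges G \<and> is_walk G (y#zs)"
proof
  assume h: "is_walk G (x#y#zs)"
  have "(x,y) \<in> edges G" using h unfolding is_walk_def by (metis length_Cons less_Suc_eq_0_disj nth_Cons_0 nth_Cons_Suc zero_less_Suc)
  moreover have "\<forall>i. Suc i < length (y#zs) \<longrightarrow> ((y#zs) ! i, (y#zs) ! Suc i) \<in> edges G"
  proof (intro allI impI)
    fix i assume "Suc i < length (y#zs)"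
    then have "Suc (Suc i) < length (x#y#zs)" by simp
    then have "((x#y#zs) ! Suc i, (x#y#zs) ! Suc (Suc i)) \<in> edges G" using h unfolding is_walk_def by blast
    then show "((y#zs) ! i, (y#zs) ! Suc i) \<in> edges G" by simp
  qed
  ultimately show "x \<in> verts G \<and> (x,y) \<in> edges G \<and> is_walk G (y#zs)" using h unfolding is_walk_def by auto
next
  assume h: "x \<in> verts G \<and> (x,y) \<in> edges G \<and> is_walk G (y#zs)"
  show "is_walk G (x#y#zs)" unfolding is_walk_def
  proof (intro conjI allI impI)
    show "set (x # y # zs) \<subseteq> verts G" using h unfolding is_walk_def by auto
    fix i assume i: "Suc i < length (x#y#zs)"
    show "((x#y#zs) ! i, (x#y#zs) ! Suc i) \<in> edges G"
    proof (cases i)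
      case 0 then show ?thesis using h by simp
    next
      case (Suc k)
      then have "Suc k < length (y#zs)" using i by simp
      then have "((y#zs) ! k, (y#zs) ! Suc k) \<in> edges G" using h unfolding is_walk_def by blast
      then show ?thesis using Suc by simp
    qed
  qed simp
qed

lemma walk_weight_single[simp]: "walk_weight G [x] = 0"
  by (simp add: walk_weight_def)

lemma walk_weight_Cons2: "walk_weight G (x#y#zs) = weight G x y + walk_weight G (y#zs)"
  unfolding walk_weight_def by (simp del: sum.lessThan_Suc add: sum.lessThan_Suc_shift)

lemma walk_append:
  "is_walk G (xs @ [b]) \<Longrightarrow> is_walk G (b # ys) \<Longrightarrow>
   is_walk G (xs @ b # ys) \<and> walk_weight G (xs @ b # ys) = walk_weight G (xs @ [b]) + walk_weight G (b # ys)"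
proof (induction xs)
  case Nil then show ?case by simp
next
  case (Cons a xs)
  show ?case
  proof (cases xs)
    case Nil
    then show ?thesis using Cons.prems by (simp add: is_walk_Cons2 walk_weight_Cons2)
  next
    case (Cons c xs')
    have w: "is_walk G (a # c # xs' @ [b])" using Cons.prems(1) Cons by simp
    then have w2: "is_walk G (xs @ [b])" using Cons by (simp add: is_walk_Cons2)
    from Cons.IH[OF w2 Cons.prems(2)] w show ?thesis using Cons
      by (simp add: is_walk_Cons2 walk_weight_Cons2)
  qed
qed

lemma walk_rev:
  assumes G: "ugraph G"
  shows "is_walk G xs \<Longrightarrow> is_walk G (rev xs) \<and> walk_weight G (rev xs) = walk_weight G xs"
proof (induction xs)
  case Nil then show ?case by (simp add: is_walk_def)
next
  case (Cons a xs)
  show ?case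
  proof (cases xs)
    case Nil then show ?thesis using Cons.prems by simp
  next
    case (Cons c xs')
    have h: "a \<in> verts G" "(a,c) \<in> edges G" "is_walk G (c#xs')"
      using Cons.prems Cons by (auto simp: is_walk_Cons2)
    have ca: "(c,a) \<in> edges G" using G h(2) unfolding ugraph_def by (meson symD)
    have wca: "weight G c a = weight G a c" using G h(2) unfolding ugraph_def by auto
    have cv: "c \<in> verts G" using h(3) unfolding is_walk_def by auto
    have IH: "is_walk G (rev xs' @ [c]) \<and> walk_weight G (rev xs' @ [c]) = walk_weight G (c#xs')"
      using Cons.IH h(3) Cons by simp
    have w2: "is_walk G [c, a]" using ca h cv by (simp add: is_walk_Cons2)
    from walk_append[of G "rev xs'" c "[a]"] IH w2
    show ?thesis using Cons wca by (simp add: walk_weight_Cons2)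
  qed
qed

lemma walk_weight_nonneg:
  assumes G: "ugraph G" and w: "is_walk G xs"
  shows "walk_weight G xs \<ge> 0"
  unfolding walk_weight_def
proof (rule sum_nonneg)
  fix i assume "i \<in> {..<length xs - 1}"
  then have "(xs ! i, xs ! Suc i) \<in> edges G" using w unfolding is_walk_def by auto
  then show "weight G (xs ! i) (xs ! Suc i) \<ge> 0" using G unfolding ugraph_def by auto
qed

lemma gdist_le_walk: "is_walk G W \<Longrightarrow> hd W = a \<Longrightarrow> last W = b \<Longrightarrow> gdist G a b \<le> ennreal (walk_weight G W)"
  unfolding gdist_def by (rule INF_lower) auto

lemma gdist_sym_le:
  assumes G: "ugraph G" shows "gdist G a b \<le> gdist G b a"
  unfolding gdist_def[of G b a]
proof (rule INF_greatest)
  fix W assume "W \<in> {xs. is_walk G xs \<and> hd xs = b \<and> last xs = a}"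
  then have W: "is_walk G W" "hd W = b" "last W = a" by auto
  have "W \<noteq> []" using W unfolding is_walk_def by auto
  then show "gdist G a b \<le> ennreal (walk_weight G W)"
    using walk_rev[OF G W(1)] W gdist_le_walk[of G "rev W" a b] by (simp add: hd_rev last_rev)
qed

lemma gdist_sym: "ugraph G \<Longrightarrow> gdist G a b = gdist G b a"
  using gdist_sym_le by (metis antisym)

lemma ennreal_add_INF:
  fixes c :: ennreal
  shows "c + (INF y\<in>B. g y) = (INF y\<in>B. c + g y)"
proof (cases "B = {}")
  case True then show ?thesis by simp
next
  case False
  have "(\<lambda>x. c + x) (Inf (g ` B)) = (INF s\<in>g ` B. (\<lambda>x. c + x) s)"
    by (rule continuous_at_Inf_mono) (auto simp: mono_def add_left_mono False intro!: continuous_intros)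
  then show ?thesis by (simp add: image_comp)
qed

lemma ennreal_le_INF_add:
  fixes z :: ennreal
  assumes "\<And>x y. x \<in> A \<Longrightarrow> y \<in> B \<Longrightarrow> z \<le> f x + g y"
  shows "z \<le> (INF x\<in>A. f x) + (INF y\<in>B. g y)"
proof -
  have "z \<le> (INF x\<in>A. f x + (INF y\<in>B. g y))"
  proof (rule INF_greatest)
    fix x assume x: "x \<in> A"
    show "z \<le> f x + (INF y\<in>B. g y)" unfolding ennreal_add_INF
      by (rule INF_greatest) (use assms x in auto)
  qed
  also have "\<dots> = (INF x\<in>A. f x) + (INF y\<in>B. g y)"
    using ennreal_add_INF[where c="INF y\<in>B. g y" and B=A and g=f] by (simp add: add.commute)
  finally show ?thesis .
qed

lemma gdist_triangle:
  assumes G: "ugraph G" shows "gdist G a c \<le> gdist G a b + gdist G b c"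
  unfolding gdist_def[of G a b] gdist_def[of G b c]
proof (rule ennreal_le_INF_add)
  fix W1 W2 assume "W1 \<in> {xs. is_walk G xs \<and> hd xs = a \<and> last xs = b}"
    "W2 \<in> {xs. is_walk G xs \<and> hd xs = b \<and> last xs = c}"
  then have W: "is_walk G W1" "hd W1 = a" "last W1 = b" "is_walk G W2" "hd W2 = b" "last W2 = c" by auto
  have ne: "W1 \<noteq> []" "W2 \<noteq> []" using W unfolding is_walk_def by auto
  have e1: "W1 = butlast W1 @ [b]" using ne W by (metis append_butlast_last_id)
  have e2: "W2 = b # tl W2" using ne W by (metis list.collapse)
  have J: "is_walk G (butlast W1 @ b # tl W2) \<and> walk_weight G (butlast W1 @ b # tl W2) = walk_weight G W1 + walk_weight G W2"
    using walk_append[of G "butlast W1" b "tl W2"] W e1 e2 by simp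
  have hd: "hd (butlast W1 @ b # tl W2) = a" using W e1 by (cases "butlast W1") auto
  have lst: "last (butlast W1 @ b # tl W2) = c" using W e2 by (metis last_appendR list.distinct(1) )
  have "gdist G a c \<le> ennreal (walk_weight G W1 + walk_weight G W2)"
    using gdist_le_walk[of G _ a c] J hd lst by metis
  also have "\<dots> = ennreal (walk_weight G W1) + ennreal (walk_weight G W2)"
    using walk_weight_nonneg[OF G W(1)] walk_weight_nonneg[OF G W(4)] by (simp add: ennreal_plus)
  finally show "gdist G a c \<le> ennreal (walk_weight G W1) + ennreal (walk_weight G W2)" .
qed


lemma walk_join:
  assumes "is_walk G X" "is_walk G Y" "last X = hd Y"
  shows "is_walk G (butlast X @ Y) \<and> walk_weight G (butlast X @ Y) = walk_weight G X + walk_weight G Y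
    \<and> hd (butlast X @ Y) = hd X \<and> last (butlast X @ Y) = last Y"
proof -
  have ne: "X \<noteq> []" "Y \<noteq> []" using assms unfolding is_walk_def by auto
  have e1: "X = butlast X @ [hd Y]" using ne assms by (metis append_butlast_last_id)
  have e2: "Y = hd Y # tl Y" using ne by simp
  have J: "is_walk G (butlast X @ hd Y # tl Y) \<and> walk_weight G (butlast X @ hd Y # tl Y) = walk_weight G X + walk_weight G Y"
    using walk_append[of G "butlast X" "hd Y" "tl Y"] assms e1 e2 by simp
  have hd: "hd (butlast X @ Y) = hd X" using e1 by (metis append_self_conv2 hd_append2 list.sel(1))
  have lst: "last (butlast X @ Y) = last Y" using ne by simp
  show ?thesis using J hd lst e2 by simp
qed

definition qpos :: "'a wgraph \<Rightarrow> 'a list \<Rightarrow> nat \<Rightarrow> real" where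
  "qpos G Q j = (\<Sum>k<j. weight G (Q!k) (Q!Suc k))"

lemma qpos_diff: "i \<le> j \<Longrightarrow> qpos G Q j - qpos G Q i = (\<Sum>k\<in>{i..<j}. weight G (Q!k) (Q!Suc k))"
  unfolding qpos_def lessThan_atLeast0 by (simp add: sum_diff_nat_ivl)

lemma qpos_mono:
  assumes G: "ugraph G" and Q: "is_walk G Q" and ij: "i \<le> j" "j < length Q"
  shows "qpos G Q i \<le> qpos G Q j"
proof -
  have "0 \<le> (\<Sum>k\<in>{i..<j}. weight G (Q!k) (Q!Suc k))"
  proof (rule sum_nonneg)
    fix k assume "k \<in> {i..<j}"
    then have "Suc k < length Q" using ij by auto
    then have "(Q!k, Q!Suc k) \<in> edges G" using Q unfolding is_walk_def by auto
    then show "0 \<le> weight G (Q!k) (Q!Suc k)" using G unfolding ugraph_def by auto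
  qed
  then show ?thesis using qpos_diff[OF ij(1), of G Q] by simp
qed

lemma subwalk:
  assumes Q: "is_walk G Q" and ij: "i \<le> j" "j < length Q"
  defines "W \<equiv> map ((!) Q) [i..<Suc j]"
  shows "is_walk G W \<and> hd W = Q!i \<and> last W = Q!j \<and> walk_weight G W = qpos G Q j - qpos G Q i"
proof -
  have len: "length W = Suc j - i" unfolding W_def using ij by (simp add: Suc_diff_le)
  have nth: "\<And>t. t < Suc j - i \<Longrightarrow> W ! t = Q ! (i + t)" unfolding W_def using ij by (simp del: upt_Suc add: Suc_diff_le)
  have "is_walk G W" unfolding is_walk_def
  proof (intro conjI allI impI)
    show "W \<noteq> []" using len ij by (auto simp: Suc_diff_le)
    have "set W \<subseteq> set Q" unfolding W_def using ij by (auto simp del: upt_Suc intro!: nth_mem)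
    then show "set W \<subseteq> verts G" using Q unfolding is_walk_def by auto
    fix t assume t: "Suc t < length W"
    then have "Suc (i + t) < length Q" using len ij by auto
    then have "(Q!(i+t), Q!Suc (i+t)) \<in> edges G" using Q unfolding is_walk_def by auto
    then show "(W ! t, W ! Suc t) \<in> edges G" using nth t len by simp
  qed
  moreover have "hd W = Q!i" unfolding W_def using ij by (simp add: hd_map upt_rec)
  moreover have "last W = Q!j" unfolding W_def using ij by (simp add: last_map)
  moreover have "walk_weight G W = qpos G Q j - qpos G Q i"
  proof -
    have "walk_weight G W = (\<Sum>t<j - i. weight G (W ! t) (W ! Suc t))"
      unfolding walk_weight_def len by simp
    also have "\<dots> = (\<Sum>t<j - i. weight G (Q ! (i+t)) (Q ! Suc (i+t)))"
      by (rule sum.cong) (use nth in auto)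
    also have "\<dots> = (\<Sum>k\<in>{i..<j}. weight G (Q!k) (Q!Suc k))"
    proof -
      have "(\<Sum>k\<in>{0+i..<(j-i)+i}. weight G (Q!k) (Q!Suc k)) = (\<Sum>t\<in>{0..<j-i}. weight G (Q ! (t+i)) (Q ! Suc (t+i)))"
        by (rule sum.shift_bounds_nat_ivl)
      then show ?thesis using ij by (simp add: lessThan_atLeast0 add.commute)
    qed
    also have "\<dots> = qpos G Q j - qpos G Q i" using qpos_diff[OF ij(1), of G Q] by simp
    finally show ?thesis .
  qed
  ultimately show ?thesis by blast
qed

lemma qwalk:
  assumes G: "ugraph G" and Q: "is_walk G Q" and ij: "i < length Q" "j < length Q"
  shows "\<exists>W. is_walk G W \<and> hd W = Q!i \<and> last W = Q!j \<and> walk_weight G W = \<bar>qpos G Q j - qpos G Q i\<bar>"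
proof (cases "i \<le> j")
  case True
  then show ?thesis using subwalk[OF Q True ij(2)] qpos_mono[OF G Q True ij(2)] by (intro exI) auto
next
  case False
  then have ji: "j \<le> i" by simp
  obtain W where W: "is_walk G W" "hd W = Q!j" "last W = Q!i" "walk_weight G W = qpos G Q i - qpos G Q j"
    using subwalk[OF Q ji ij(1)] by blast
  have ne: "W \<noteq> []" using W unfolding is_walk_def by auto
  show ?thesis
    apply (rule exI[of _ "rev W"])
    using walk_rev[OF G W(1)] W ne qpos_mono[OF G Q ji ij(1)] by (simp add: hd_rev last_rev)
qed

lemma path_dist_eq:
  assumes G: "ugraph G" and Qw: "is_walk G Q" and Q: "distinct Q" and ij: "i < length Q" "j < length Q"
  shows "path_dist G Q (Q!i) (Q!j) = \<bar>qpos G Q j - qpos G Q i\<bar>"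
proof -
  have ti: "(THE t. t < length Q \<and> Q ! t = Q!i) = i"
    using Q ij by (auto intro!: the_equality simp: nth_eq_iff_index_eq)
  have tj: "(THE t. t < length Q \<and> Q ! t = Q!j) = j"
    using Q ij by (auto intro!: the_equality simp: nth_eq_iff_index_eq)
  show ?thesis unfolding path_dist_def Let_def ti tj
  proof (cases "i \<le> j")
    case True
    then show "(\<Sum>k\<in>{min i j..<max i j}. weight G (Q ! k) (Q ! Suc k)) = \<bar>qpos G Q j - qpos G Q i\<bar>"
      using qpos_diff[OF True, of G Q] qpos_mono[OF G Qw True ij(2)] by simp
  next
    case False
    then show "(\<Sum>k\<in>{min i j..<max i j}. weight G (Q ! k) (Q ! Suc k)) = \<bar>qpos G Q j - qpos G Q i\<bar>"
      using qpos_diff[of j i G Q] qpos_mono[OF G Qw _ ij(1), of j] by simp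
  qed
qed


lemma walk_weight_qpos: "walk_weight G Q = qpos G Q (length Q - 1)"
  unfolding walk_weight_def qpos_def by simp

lemma subpath_opt:
  assumes G: "ugraph G" and SP: "shortest_path G Q" and ij: "i \<le> j" "j < length Q"
  shows "ennreal (qpos G Q j - qpos G Q i) \<le> gdist G (Q!i) (Q!j)"
  unfolding gdist_def
proof (rule INF_greatest)
  fix W assume "W \<in> {xs. is_walk G xs \<and> hd xs = Q!i \<and> last xs = Q!j}"
  then have W: "is_walk G W" "hd W = Q!i" "last W = Q!j" by auto
  have Qw: "is_walk G Q" and Qd: "ennreal (walk_weight G Q) = gdist G (hd Q) (last Q)"
    using SP unfolding shortest_path_def by auto
  define n where "n = length Q"
  have n0: "n > 0" using ij n_def by auto
  obtain A where A: "is_walk G A" "hd A = Q!0" "last A = Q!i" "walk_weight G A = qpos G Q i - qpos G Q 0"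
    using subwalk[OF Qw _ , of 0 i] ij by auto
  obtain B where B: "is_walk G B" "hd B = Q!j" "last B = Q!(n-1)" "walk_weight G B = qpos G Q (n-1) - qpos G Q j"
  proof -
    have "j \<le> n - 1" "n - 1 < length Q" using n0 ij n_def by auto
    from subwalk[OF Qw this] show ?thesis using that by blast
  qed
  obtain X1 where X1: "is_walk G X1" "hd X1 = Q!0" "last X1 = Q!j" "walk_weight G X1 = walk_weight G A + walk_weight G W"
    using walk_join[OF A(1) W(1)] A W by metis
  obtain X2 where X2: "is_walk G X2" "hd X2 = Q!0" "last X2 = Q!(n-1)" "walk_weight G X2 = walk_weight G X1 + walk_weight G B"
    using walk_join[OF X1(1) B(1)] X1 B by metis
  have hdQ: "hd Q = Q!0" using n0 n_def by (simp add: hd_conv_nth)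
  have lastQ: "last Q = Q!(n-1)" using n0 n_def by (simp add: last_conv_nth)
  have "ennreal (walk_weight G Q) \<le> ennreal (walk_weight G X2)"
    unfolding Qd hdQ lastQ by (rule gdist_le_walk[OF X2(1-3)])
  then have "walk_weight G Q \<le> walk_weight G X2"
    using walk_weight_nonneg[OF G X2(1)] by (simp add: ennreal_le_iff)
  then have "qpos G Q j - qpos G Q i \<le> walk_weight G W"
    using X2(4) X1(4) A(4) B(4) walk_weight_qpos[of G Q] n_def by (simp add: qpos_def)
  then show "ennreal (qpos G Q j - qpos G Q i) \<le> ennreal (walk_weight G W)"
    by (rule ennreal_leI)
qed

lemma bucket:
  fixes J :: "nat set" and x F :: "nat \<Rightarrow> real" and c :: "'s \<Rightarrow> nat \<Rightarrow> real" and w :: "nat \<Rightarrow> 's"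
  assumes fin: "finite J" and e: "\<epsilon> > 0" and M: "M \<ge> 0"
    and Fc: "\<forall>i\<in>J. c (w i) i = F i"
    and lip: "\<forall>i\<in>J. \<forall>j\<in>J. x i \<le> x j \<longrightarrow> c (w i) j \<le> c (w i) i + (x j - x i)"
    and Flow: "\<forall>j\<in>J. M \<le> 3 * F j"
    and Psi: "\<forall>j\<in>J. psi \<le> x j - F j \<and> x j - F j \<le> psi + 2*M"
  shows "\<exists>P. P \<subseteq> w ` J \<and> real (card P) \<le> 6/\<epsilon> + 1 \<and> (\<forall>j\<in>J. \<exists>i\<in>J. w i \<in> P \<and> c (w i) j \<le> (1+\<epsilon>) * F j)"
proof -
  have exmin: "\<And>A::nat set. finite A \<Longrightarrow> A \<noteq> {} \<Longrightarrow> \<exists>a\<in>A. \<forall>b\<in>A. x a \<le> x b"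
  proof -
    fix A :: "nat set" assume "finite A" "A \<noteq> {}"
    then have "Min (x ` A) \<in> x ` A" by simp
    then obtain a where "a \<in> A" "x a = Min (x ` A)" by auto
    then show "\<exists>a\<in>A. \<forall>b\<in>A. x a \<le> x b" using \<open>finite A\<close> by (metis Min_le finite_imageI imageI)
  qed
  show ?thesis
  proof (cases "J = {}")
    case True then show ?thesis by (intro exI[of _ "{}"]) (simp add: e less_imp_le)
  next
    case Jne: False
    show ?thesis
    proof (cases "M = 0")
      case True
      obtain i0 where i0: "i0 \<in> J" "\<forall>b\<in>J. x i0 \<le> x b" using exmin[OF fin Jne] by blast
      show ?thesis
      proof (intro exI[of _ "{w i0}"] conjI ballI)
        show "{w i0} \<subseteq> w ` J" using i0 by auto
        show "real (card {w i0}) \<le> 6 / \<epsilon> + 1" using e by simp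
        fix j assume j: "j \<in> J"
        have "c (w i0) j \<le> F i0 + (x j - x i0)" using lip i0 j Fc by auto
        also have "\<dots> = F j" using Psi[rule_format, OF i0(1)] Psi[rule_format, OF j] True by linarith
        also have "\<dots> \<le> (1+\<epsilon>) * F j" using Flow j True e by (simp add: algebra_simps)
        finally show "\<exists>i\<in>J. w i \<in> {w i0} \<and> c (w i) j \<le> (1 + \<epsilon>) * F j" using i0 by auto
      qed
    next
      case False
      then have Mp: "M > 0" using M by simp
      define \<theta> where "\<theta> = \<epsilon> * M / 3"
      have th: "\<theta> > 0" using Mp e by (simp add: \<theta>_def)
      define k where "k j = nat \<lfloor>(x j - F j - psi) / \<theta>\<rfloor>" for j
      define rep where "rep kk = (SOME i. i \<in> J \<and> k i = kk \<and> (\<forall>j\<in>J. k j = kk \<longrightarrow> x i \<le> x j))" for kk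
      have rep: "rep (k j) \<in> J \<and> k (rep (k j)) = k j \<and> (\<forall>j'\<in>J. k j' = k j \<longrightarrow> x (rep (k j)) \<le> x j')"
        if j: "j \<in> J" for j
      proof -
        have "finite {i\<in>J. k i = k j}" "{i\<in>J. k i = k j} \<noteq> {}" using fin j by auto
        from exmin[OF this] have "\<exists>i. i \<in> J \<and> k i = k j \<and> (\<forall>j'\<in>J. k j' = k j \<longrightarrow> x i \<le> x j')" by auto
        then show ?thesis unfolding rep_def by (rule someI_ex)
      qed
      define N where "N = nat \<lfloor>6 / \<epsilon>\<rfloor>"
      have kle: "k j \<le> N" if j: "j \<in> J" for j
      proof -
        have "(x j - F j - psi) / \<theta> \<le> (2*M) / \<theta>"
          using Psi j th by (intro divide_right_mono) auto
        also have "(2*M)/\<theta> = 6/\<epsilon>" using Mp e by (simp add: \<theta>_def field_simps)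
        finally show ?thesis unfolding k_def N_def by (intro nat_mono floor_mono)
      qed
      define P where "P = (w \<circ> rep) ` k ` J"
      show ?thesis
      proof (intro exI[of _ P] conjI ballI)
        show "P \<subseteq> w ` J" unfolding P_def using rep by auto
        have "card P \<le> card (k ` J)" unfolding P_def by (rule card_image_le) (use fin in simp)
        also have "\<dots> \<le> card {0..N}" by (rule card_mono) (use kle in auto)
        also have "\<dots> = N + 1" by simp
        finally have "real (card P) \<le> real N + 1" by linarith
        also have "real N \<le> 6/\<epsilon>"
        proof -
          have "0 \<le> \<lfloor>6/\<epsilon>\<rfloor>" using e by simp
          then have "real N = real_of_int \<lfloor>6/\<epsilon>\<rfloor>" unfolding N_def by simp
          then show ?thesis using of_int_floor_le[of "6/\<epsilon>"] by linarith
        qed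
        finally show "real (card P) \<le> 6 / \<epsilon> + 1" by simp
        fix j assume j: "j \<in> J"
        define i where "i = rep (k j)"
        have i: "i \<in> J" "k i = k j" "x i \<le> x j" using rep[OF j] j unfolding i_def by auto
        have a1: "x j - F j - psi \<ge> 0" "x i - F i - psi \<ge> 0" using Psi j i(1) by auto
        have fl: "\<lfloor>(x j - F j - psi) / \<theta>\<rfloor> = \<lfloor>(x i - F i - psi) / \<theta>\<rfloor>"
          using i(2) a1 th unfolding k_def by (simp add: nat_eq_iff2)
        have "(x j - F j - psi) / \<theta> - (x i - F i - psi) / \<theta> < 1"
          using fl by linarith
        then have "((x j - F j - psi) - (x i - F i - psi)) / \<theta> < 1" by (simp only: diff_divide_distrib)
        then have d: "(x j - F j - psi) - (x i - F i - psi) < \<theta>" using th by (simp add: pos_divide_less_eq)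
        have t: "\<theta> \<le> \<epsilon> * F j"
        proof -
          have "M / 3 \<le> F j" using Flow j by auto
          then have "\<epsilon> * (M/3) \<le> \<epsilon> * F j" using e by (intro mult_left_mono) auto
          then show ?thesis unfolding \<theta>_def by simp
        qed
        have cc: "c (w i) j \<le> F i + (x j - x i)" using lip i j Fc by auto
        have ee: "(1+\<epsilon>) * F j = F j + \<epsilon> * F j" by (simp add: algebra_simps)
        have "c (w i) j \<le> (1+\<epsilon>) * F j" using d t cc ee by linarith
        moreover have "w i \<in> P" unfolding P_def i_def using j by auto
        ultimately show "\<exists>i\<in>J. w i \<in> P \<and> c (w i) j \<le> (1 + \<epsilon>) * F j" using i(1) by blast
      qed
    qed
  qed
qed



lemma core:
  fixes G H :: "'a wgraph" and Q :: "'a list" and u :: 'a and \<epsilon>1 \<epsilon>2 :: real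
  assumes G: "ugraph G" and SP: "shortest_path G Q" and e1: "\<epsilon>1 > 0" and e2: "\<epsilon>2 > 0"
    and uH: "u \<in> verts H" and VH: "verts H \<subseteq> verts G"
    and dom: "\<forall>v1\<in>verts H. \<forall>v2\<in>verts H. gdist H v1 v2 \<ge> gdist G v1 v2"
    and hyp: "\<forall>v\<in>set Q. \<exists>v'\<in>verts H \<inter> set Q.
          gdist H u v' + ennreal (path_dist G Q v' v) \<le> ennreal (1 + \<epsilon>1) * gdist G u v"
  shows "\<exists>P. P \<subseteq> verts H \<inter> set Q \<and> real (card P) \<le> 12 * (1 + 1 / \<epsilon>2) \<and>
            (\<forall>v\<in>set Q. \<exists>p\<in>P.
               gdist H u p + ennreal (path_dist G Q p v)
                 \<le> ennreal ((1 + \<epsilon>1) * (1 + \<epsilon>2)) * gdist G u v)"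
proof -
  have Qw: "is_walk G Q" and Qdist: "distinct Q" using SP unfolding shortest_path_def by auto
  define n where "n = length Q"
  have n0: "n > 0" using Qw n_def unfolding is_walk_def by auto
  define S where "S = verts H \<inter> set Q"
  have finS: "finite S" unfolding S_def by simp
  have SneQ: "Q!0 \<in> set Q" using n0 n_def by simp
  then obtain v0 where v0: "v0 \<in> S" using hyp S_def by blast
  define idx where "idx s = (THE i. i < n \<and> Q!i = s)" for s
  have idx: "idx s < n \<and> Q!(idx s) = s" if sQ: "s \<in> set Q" for s
  proof -
    obtain i where i: "i < n" "Q!i = s" using sQ n_def by (metis in_set_conv_nth)
    have "idx s = i" unfolding idx_def using i Qdist n_def by (auto intro!: the_equality simp: nth_eq_iff_index_eq)
    then show ?thesis using i by simp
  qed
  define D where "D j = gdist G u (Q!j)" for j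
  define a where "a s = gdist H u s" for s
  define ce where "ce s j = a s + ennreal \<bar>qpos G Q (idx s) - qpos G Q j\<bar>" for s j
  define c where "c s j = enn2real (a s) + \<bar>qpos G Q (idx s) - qpos G Q j\<bar>" for s j
  define Dr where "Dr j = enn2real (D j)" for j
  define J where "J = {j. j < n \<and> D j \<noteq> top}"
  have finJ: "finite J" unfolding J_def by simp
  have pd: "path_dist G Q s (Q!j) = \<bar>qpos G Q (idx s) - qpos G Q j\<bar>" if "s \<in> set Q" "j < n" for s j
    using path_dist_eq[OF G Qw Qdist, of "idx s" j] idx[OF that(1)] that n_def by (simp add: abs_minus_commute)
  have pos_top: "ennreal ((1 + \<epsilon>1) * (1 + \<epsilon>2)) * top = top"
    using e1 e2 by (simp add: ennreal_mult_top)
  show ?thesis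
  proof (cases "J = {}")
    case True
    show ?thesis
    proof (intro exI[of _ "{v0}"] conjI ballI)
      show "{v0} \<subseteq> verts H \<inter> set Q" using v0 S_def by auto
      show "real (card {v0}) \<le> 12 * (1 + 1/\<epsilon>2)" using e2 by simp
      fix v assume v: "v \<in> set Q"
      have "gdist G u v = top" using True idx[OF v] unfolding J_def D_def by auto
      then show "\<exists>p\<in>{v0}. gdist H u p + ennreal (path_dist G Q p v)
                 \<le> ennreal ((1 + \<epsilon>1) * (1 + \<epsilon>2)) * gdist G u v" using pos_top by simp
    qed
  next
    case Jne: False
    have Dfin: "D j = ennreal (Dr j)" if "j \<in> J" for j
      using that unfolding J_def Dr_def by (simp add: top.not_eq_extremum)
    obtain m where m: "m \<in> J" "\<forall>j\<in>J. Dr m \<le> Dr j"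
    proof -
      have "Min (Dr ` J) \<in> Dr ` J" using finJ Jne by simp
      then obtain m where "m \<in> J" "Dr m = Min (Dr ` J)" by auto
      then show ?thesis using that finJ by (metis Min_le finite_imageI imageI)
    qed
    define w where "w j = (SOME s. s \<in> S \<and> (\<forall>t\<in>S. ce s j \<le> ce t j))" for j
    have wprop: "w j \<in> S \<and> (\<forall>t\<in>S. ce (w j) j \<le> ce t j)" for j
    proof -
      have Sne: "S \<noteq> {}" using v0 by auto
      have "Min ((\<lambda>t. ce t j) ` S) \<in> (\<lambda>t. ce t j) ` S" using finS Sne by simp
      then obtain s where "s \<in> S" "ce s j = Min ((\<lambda>t. ce t j) ` S)" by auto
      then have "\<exists>s. s \<in> S \<and> (\<forall>t\<in>S. ce s j \<le> ce t j)" using finS by (metis Min_le finite_imageI imageI)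
      then show ?thesis unfolding w_def by (rule someI_ex)
    qed
    have wS: "w j \<in> set Q" "w j \<in> verts H" for j using wprop[of j] S_def by auto
    define F where "F j = c (w j) j" for j
    have cnn: "c s j \<ge> 0" for s j unfolding c_def by simp
    have ctri: "c s j \<le> c s i + \<bar>qpos G Q j - qpos G Q i\<bar>" for s i j
      unfolding c_def by arith
    have ce_c: "ce s j = ennreal (c s j)" if "a s \<noteq> top" for s j
      using that unfolding ce_def c_def by (simp add: top.not_eq_extremum)
    have F23: "a (w j) \<noteq> top \<and> F j \<le> (1+\<epsilon>1) * Dr j" if j: "j \<in> J" for j
    proof -
      have jn: "j < n" using j J_def by auto
      obtain v' where v': "v' \<in> S" "a v' + ennreal (path_dist G Q v' (Q!j)) \<le> ennreal (1 + \<epsilon>1) * D j"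
        using hyp jn n_def unfolding S_def a_def D_def by (metis nth_mem)
      have "ce v' j \<le> ennreal (1 + \<epsilon>1) * D j" using v' pd[of v' j] jn S_def unfolding ce_def by auto
      then have le: "ce (w j) j \<le> ennreal ((1 + \<epsilon>1) * Dr j)"
        using wprop[of j] v'(1) Dfin[OF j] e1 by (metis ennreal_mult' order.trans less_imp_le add_pos_pos zero_less_one)
      then have "a (w j) \<noteq> top" unfolding ce_def by (auto simp: top_unique)
      moreover have "ennreal (F j) \<le> ennreal ((1 + \<epsilon>1) * Dr j)" using le ce_c[OF calculation] F_def by simp
      then have "F j \<le> (1 + \<epsilon>1) * Dr j" using e1 by (simp add: Dr_def)
      ultimately show ?thesis by simp
    qed
    have F4: "Dr j \<le> F j" if j: "j \<in> J" for j
    proof -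
      have jn: "j < n" using j J_def by auto
      have iw: "idx (w j) < n" "Q ! idx (w j) = w j" using idx[OF wS(1)] by auto
      obtain W where W: "is_walk G W" "hd W = Q!(idx (w j))" "last W = Q!j"
        "walk_weight G W = \<bar>qpos G Q j - qpos G Q (idx (w j))\<bar>"
        using qwalk[OF G Qw, of "idx (w j)" j] iw jn n_def by auto
      have "D j \<le> gdist G u (w j) + gdist G (w j) (Q!j)" unfolding D_def by (rule gdist_triangle[OF G])
      also have "gdist G u (w j) \<le> a (w j)" using dom uH wS(2) unfolding a_def by auto
      also have "gdist G (w j) (Q!j) \<le> ennreal \<bar>qpos G Q (idx (w j)) - qpos G Q j\<bar>"
        using gdist_le_walk[OF W(1-3)] W(4) iw by (simp add: abs_minus_commute)
      finally have "D j \<le> ce (w j) j" unfolding ce_def by (simp add: add_mono)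
      then have "ennreal (Dr j) \<le> ennreal (F j)" using Dfin[OF j] ce_c F23[OF j] F_def by simp
      then show ?thesis using cnn F_def by simp
    qed
    have Drnn: "Dr j \<ge> 0" for j unfolding Dr_def by simp
    have F5a: "\<bar>qpos G Q j - qpos G Q i\<bar> \<le> Dr i + Dr j" if ij: "i \<in> J" "j \<in> J" "i \<le> j" for i j
    proof -
      have jn: "j < n" using ij J_def by auto
      have mono: "qpos G Q i \<le> qpos G Q j" using qpos_mono[OF G Qw ij(3)] jn n_def by simp
      have "ennreal (qpos G Q j - qpos G Q i) \<le> gdist G (Q!i) (Q!j)"
        using subpath_opt[OF G SP ij(3)] jn n_def by simp
      also have "\<dots> \<le> gdist G (Q!i) u + gdist G u (Q!j)" by (rule gdist_triangle[OF G])
      also have "\<dots> = D i + D j" unfolding D_def using gdist_sym[OF G] by simp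
      also have "\<dots> = ennreal (Dr i + Dr j)" using Dfin ij by (simp add: Dr_def)
      finally have X: "ennreal (qpos G Q j - qpos G Q i) \<le> ennreal (Dr i + Dr j)" .
      have "0 \<le> Dr i + Dr j" using Drnn[of i] Drnn[of j] by simp
      then have "qpos G Q j - qpos G Q i \<le> Dr i + Dr j" using X ennreal_le_iff by blast
      then show ?thesis using mono by simp
    qed
    have F5: "\<bar>qpos G Q j - qpos G Q i\<bar> \<le> Dr i + Dr j" if ij: "i \<in> J" "j \<in> J" for i j
    proof (cases "i \<le> j")
      case True then show ?thesis using F5a ij by simp
    next
      case False then show ?thesis using F5a[of j i] ij by (simp add: abs_minus_commute add.commute)
    qed
    have F7: "F j \<le> F i + \<bar>qpos G Q j - qpos G Q i\<bar>" if ij: "i \<in> J" "j \<in> J" for i j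
    proof -
      have "ce (w j) j \<le> ce (w i) j" using wprop[of j] wprop[of i] by auto
      then have "ennreal (F j) \<le> ennreal (c (w i) j)" using ce_c F23 ij F_def by simp
      then have "F j \<le> c (w i) j" using cnn by simp
      then show ?thesis using ctri[of "w i" j i] F_def by simp
    qed
    define M where "M = F m"
    have Fnn: "F j \<ge> 0" for j using cnn F_def by simp
    have Flow: "\<forall>j\<in>J. M \<le> 3 * F j"
    proof
      fix j assume j: "j \<in> J"
      have "M \<le> F j + \<bar>qpos G Q m - qpos G Q j\<bar>" using F7[OF j m(1)] M_def by simp
      moreover have "\<bar>qpos G Q m - qpos G Q j\<bar> \<le> Dr j + Dr m" using F5[OF j m(1)] by simp
      moreover have "Dr m \<le> Dr j" using m(2) j by simp
      ultimately show "M \<le> 3 * F j" using F4[OF j] by linarith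
    qed
    have DmM: "Dr m \<le> M" using F4[OF m(1)] M_def by simp
    define JR where "JR = {j\<in>J. qpos G Q m \<le> qpos G Q j}"
    define JL where "JL = {j\<in>J. qpos G Q j \<le> qpos G Q m}"
    obtain PR where PR: "PR \<subseteq> w ` JR" "real (card PR) \<le> 6/\<epsilon>2 + 1"
      "\<forall>j\<in>JR. \<exists>i\<in>JR. w i \<in> PR \<and> c (w i) j \<le> (1+\<epsilon>2) * F j"
    proof -
      have "\<exists>P. P \<subseteq> w ` JR \<and> real (card P) \<le> 6/\<epsilon>2 + 1 \<and> (\<forall>j\<in>JR. \<exists>i\<in>JR. w i \<in> P \<and> c (w i) j \<le> (1+\<epsilon>2) * F j)"
      proof (rule bucket[where x="qpos G Q" and psi="qpos G Q m - M" and M=M])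
        show "finite JR" using finJ JR_def by simp
        show "0 < \<epsilon>2" by (rule e2)
        show "0 \<le> M" using Fnn M_def by simp
        show "\<forall>i\<in>JR. c (w i) i = F i" using F_def by simp
        show "\<forall>i\<in>JR. \<forall>j\<in>JR. qpos G Q i \<le> qpos G Q j \<longrightarrow> c (w i) j \<le> c (w i) i + (qpos G Q j - qpos G Q i)"
        proof (intro ballI impI)
          fix i j assume "qpos G Q i \<le> qpos G Q j"
          then show "c (w i) j \<le> c (w i) i + (qpos G Q j - qpos G Q i)" using ctri[of "w i" j i] by simp
        qed
        show "\<forall>j\<in>JR. M \<le> 3 * F j" using Flow JR_def by simp
        show "\<forall>j\<in>JR. qpos G Q m - M \<le> qpos G Q j - F j \<and> qpos G Q j - F j \<le> qpos G Q m - M + 2 * M"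
        proof
          fix j assume j: "j \<in> JR"
          have jJ: "j \<in> J" and le: "qpos G Q m \<le> qpos G Q j" using j JR_def by auto
          have "F j \<le> M + \<bar>qpos G Q j - qpos G Q m\<bar>" using F7[OF m(1) jJ] M_def by simp
          moreover have "\<bar>qpos G Q j - qpos G Q m\<bar> \<le> Dr m + Dr j" using F5[OF m(1) jJ] by simp
          ultimately show "qpos G Q m - M \<le> qpos G Q j - F j \<and> qpos G Q j - F j \<le> qpos G Q m - M + 2 * M"
            using le F4[OF jJ] DmM by auto
        qed
      qed
      then show ?thesis using that by blast
    qed
    obtain PL where PL: "PL \<subseteq> w ` JL" "real (card PL) \<le> 6/\<epsilon>2 + 1"
      "\<forall>j\<in>JL. \<exists>i\<in>JL. w i \<in> PL \<and> c (w i) j \<le> (1+\<epsilon>2) * F j"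
    proof -
      have "\<exists>P. P \<subseteq> w ` JL \<and> real (card P) \<le> 6/\<epsilon>2 + 1 \<and> (\<forall>j\<in>JL. \<exists>i\<in>JL. w i \<in> P \<and> c (w i) j \<le> (1+\<epsilon>2) * F j)"
      proof (rule bucket[where x="\<lambda>j. - qpos G Q j" and psi="- qpos G Q m - M" and M=M])
        show "finite JL" using finJ JL_def by simp
        show "0 < \<epsilon>2" by (rule e2)
        show "0 \<le> M" using Fnn M_def by simp
        show "\<forall>i\<in>JL. c (w i) i = F i" using F_def by simp
        show "\<forall>i\<in>JL. \<forall>j\<in>JL. - qpos G Q i \<le> - qpos G Q j \<longrightarrow> c (w i) j \<le> c (w i) i + (- qpos G Q j - - qpos G Q i)"
        proof (intro ballI impI)
          fix i j assume "- qpos G Q i \<le> - qpos G Q j"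
          then show "c (w i) j \<le> c (w i) i + (- qpos G Q j - - qpos G Q i)" using ctri[of "w i" j i] by simp
        qed
        show "\<forall>j\<in>JL. M \<le> 3 * F j" using Flow JL_def by simp
        show "\<forall>j\<in>JL. - qpos G Q m - M \<le> - qpos G Q j - F j \<and> - qpos G Q j - F j \<le> - qpos G Q m - M + 2 * M"
        proof
          fix j assume j: "j \<in> JL"
          have jJ: "j \<in> J" and le: "qpos G Q j \<le> qpos G Q m" using j JL_def by auto
          have "F j \<le> M + \<bar>qpos G Q j - qpos G Q m\<bar>" using F7[OF m(1) jJ] M_def by simp
          moreover have "\<bar>qpos G Q j - qpos G Q m\<bar> \<le> Dr m + Dr j" using F5[OF m(1) jJ] by simp
          ultimately show "- qpos G Q m - M \<le> - qpos G Q j - F j \<and> - qpos G Q j - F j \<le> - qpos G Q m - M + 2 * M"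
            using le F4[OF jJ] DmM by auto
        qed
      qed
      then show ?thesis using that by blast
    qed
    define P where "P = PR \<union> PL"
    have JRL: "j \<in> JR \<or> j \<in> JL" if "j \<in> J" for j using that JR_def JL_def by auto
    have cover: "\<exists>i\<in>J. w i \<in> P \<and> c (w i) j \<le> (1+\<epsilon>2) * F j" if j: "j \<in> J" for j
      using JRL[OF j] PR(3) PL(3) P_def JR_def JL_def by blast
    show ?thesis
    proof (intro exI[of _ P] conjI ballI)
      show "P \<subseteq> verts H \<inter> set Q" using PR(1) PL(1) P_def wprop S_def by blast
      have "card P \<le> card PR + card PL" unfolding P_def by (rule card_Un_le)
      then have "real (card P) \<le> real (card PR) + real (card PL)" by linarith
      also have "\<dots> \<le> 12 * (1 + 1/\<epsilon>2)" using PR(2) PL(2) by (simp add: algebra_simps)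
      finally show "real (card P) \<le> 12 * (1 + 1/\<epsilon>2)" .
      fix v assume v: "v \<in> set Q"
      define j where "j = idx v"
      have jn: "j < n" and vj: "Q!j = v" using idx[OF v] j_def by auto
      show "\<exists>p\<in>P. gdist H u p + ennreal (path_dist G Q p v)
                 \<le> ennreal ((1 + \<epsilon>1) * (1 + \<epsilon>2)) * gdist G u v"
      proof (cases "j \<in> J")
        case False
        then have "gdist G u v = top" using jn vj unfolding J_def D_def by auto
        moreover obtain i where "i \<in> J" "w i \<in> P" using cover[OF m(1)] by blast
        ultimately show ?thesis using pos_top by auto
      next
        case True
        obtain i where i: "i \<in> J" "w i \<in> P" "c (w i) j \<le> (1+\<epsilon>2) * F j" using cover[OF True] by blast
        have "gdist H u (w i) + ennreal (path_dist G Q (w i) v) = ce (w i) j"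
          using pd[OF wS(1) jn] vj unfolding ce_def a_def by simp
        also have "\<dots> = ennreal (c (w i) j)" using ce_c F23[OF i(1)] by simp
        also have "\<dots> \<le> ennreal ((1+\<epsilon>2) * ((1+\<epsilon>1) * Dr j))"
        proof (rule ennreal_leI)
          have "(1+\<epsilon>2) * F j \<le> (1+\<epsilon>2) * ((1+\<epsilon>1) * Dr j)"
            using F23[OF True] e2 by (intro mult_left_mono) auto
          then show "c (w i) j \<le> (1+\<epsilon>2) * ((1+\<epsilon>1) * Dr j)" using i(3) by linarith
        qed
        also have "\<dots> = ennreal ((1 + \<epsilon>1) * (1 + \<epsilon>2)) * ennreal (Dr j)"
          using e1 e2 Drnn[of j] by (simp add: ennreal_mult[symmetric] mult_ac)
        also have "\<dots> = ennreal ((1 + \<epsilon>1) * (1 + \<epsilon>2)) * gdist G u v"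
          using Dfin[OF True] vj D_def by simp
        finally show ?thesis using i(2) by blast
      qed
    qed
  qed
qed


theorem lemma2:
  shows "\<exists>C::real. C > 0 \<and>
    (\<forall>(G::'a wgraph) (H::'a wgraph) Q u (\<epsilon>1::real) (\<epsilon>2::real).
       ugraph G \<and> ugraph H \<and> shortest_path G Q \<and> \<epsilon>1 > 0 \<and> \<epsilon>2 > 0 \<and>
       u \<in> verts H \<and> verts H \<subseteq> verts G \<and>
       (\<forall>v1\<in>verts H. \<forall>v2\<in>verts H. gdist H v1 v2 \<ge> gdist G v1 v2) \<and>
       (\<forall>v\<in>set Q. \<exists>v'\<in>verts H \<inter> set Q.
          gdist H u v' + ennreal (path_dist G Q v' v) \<le> ennreal (1 + \<epsilon>1) * gdist G u v)
     \<longrightarrow> (\<exists>P. P \<subseteq> verts H \<inter> set Q \<and> real (card P) \<le> C * (1 + 1 / \<epsilon>2) \<and>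
            (\<forall>v\<in>set Q. \<exists>p\<in>P.
               gdist H u p + ennreal (path_dist G Q p v)
                 \<le> ennreal ((1 + \<epsilon>1) * (1 + \<epsilon>2)) * gdist G u v)))"
    apply (rule exI[of _ "12::real"])
  apply (intro conjI allI impI)
   apply simp
  apply (elim conjE)
  apply (rule core)
         apply assumption+
  done

end
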